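(* Let $V:\mathbb{R}^d\to\mathbb{R}$ be $\mathtt{m}$-convex ($\mathtt{m}\ge0$) and continuously differentiable, with $\|\nabla V(x)-\nabla V(y)\|\le M\|x-y\|$ for all $x,y$, where $M>0$. Assume there exists $x^*\in\arg\min_{\mathbb{R}^d}V$. Then for any $\bar\gamma<2/(M+\mathtt{m})$, $\gamma\in(0,\bar\gamma]$ and $x\in\mathbb{R}^d$, $$\|x-\gamma\nabla V(x)\|^2\le(1-\gamma\varpi)\|x\|^2+\gamma\{(2/(\mathtt{m}+M)-\bar\gamma)^{-1}+4\varpi\}\|x^*\|^2,$$ with $\varpi=\mathtt{m}M/(\mathtt{m}+M)$.
   Context: $V$ is $\mathtt{m}$-convex if $V(tx+(1-t)y)\le tV(x)+(1-t)V(y)-(\mathtt{m}/2)t(1-t)\|x-y\|^2$ for all $x,y\in\mathbb{R}^d$, $t\in[0,1]$; $\|\cdot\|$ Euclidean. *)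

theory Defs
  imports "HOL-Analysis.Analysis"
begin

definition m_convex :: "real \<Rightarrow> ('a::real_normed_vector \<Rightarrow> real) \<Rightarrow> bool" where
  "m_convex m V \<longleftrightarrow> (\<forall>x y. \<forall>t\<in>{0..1}.
     V (t *\<^sub>R x + (1 - t) *\<^sub>R y) \<le> t * V x + (1 - t) * V y - (m / 2) * t * (1 - t) * (norm (x - y))\<^sup>2)"

end

theory Submission
  imports Defs
begin

lemma line_deriv:
  fixes V :: "'a::real_inner \<Rightarrow> real"
  assumes grad: "\<And>y. (V has_derivative (\<lambda>h. G y \<bullet> h)) (at y)"
  shows "((\<lambda>t. V (w + t *\<^sub>R v)) has_real_derivative (G (w + t *\<^sub>R v) \<bullet> v)) (at t)"
proof -
  have d1: "((\<lambda>t. w + t *\<^sub>R v) has_derivative (\<lambda>s. s *\<^sub>R v)) (at t)"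
    by (auto intro!: derivative_eq_intros)
  have "((\<lambda>t. V (w + t *\<^sub>R v)) has_derivative (\<lambda>s. G (w + t *\<^sub>R v) \<bullet> (s *\<^sub>R v))) (at t)"
    using has_derivative_compose[OF d1 grad] by simp
  moreover have "(\<lambda>s. G (w + t *\<^sub>R v) \<bullet> (s *\<^sub>R v)) = (*) (G (w + t *\<^sub>R v) \<bullet> v)"
    by (rule ext) simp
  ultimately show ?thesis unfolding has_field_derivative_def by simp
qed

lemma upper:
  fixes V :: "'a::real_inner \<Rightarrow> real"
  assumes grad: "\<And>y. (V has_derivative (\<lambda>h. G y \<bullet> h)) (at y)"
    and lip: "\<And>y z. norm (G y - G z) \<le> M * norm (y - z)"
  shows "V z \<le> V w + G w \<bullet> (z - w) + M/2 * (norm (z - w))\<^sup>2"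
proof -
  define v where "v = z - w"
  define g where "g = (\<lambda>t. V (w + t *\<^sub>R v) - t * (G w \<bullet> v) - M/2 * t^2 * (norm v)\<^sup>2)"
  have "g 1 \<le> g 0"
  proof (rule DERIV_nonpos_imp_nonincreasing[of 0 1 g])
    fix t :: real assume t: "0 \<le> t" "t \<le> 1"
    have "(g has_real_derivative (G (w + t *\<^sub>R v) \<bullet> v - G w \<bullet> v - M * t * (norm v)\<^sup>2)) (at t)"
      unfolding g_def
      by (auto intro!: derivative_eq_intros line_deriv[OF grad])
    moreover have "G (w + t *\<^sub>R v) \<bullet> v - G w \<bullet> v - M * t * (norm v)\<^sup>2 \<le> 0"
    proof -
      have "G (w + t *\<^sub>R v) \<bullet> v - G w \<bullet> v = (G (w + t *\<^sub>R v) - G w) \<bullet> v"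
        by (simp add: inner_diff_left)
      also have "\<dots> \<le> norm (G (w + t *\<^sub>R v) - G w) * norm v"
        by (rule norm_cauchy_schwarz)
      also have "\<dots> \<le> M * norm (t *\<^sub>R v) * norm v"
        using lip[of "w + t *\<^sub>R v" w] by (simp add: mult_right_mono)
      also have "\<dots> = M * t * (norm v)\<^sup>2" using t by (simp add: power2_eq_square)
      finally show ?thesis by simp
    qed
    ultimately show "\<exists>y. (g has_real_derivative y) (at t) \<and> y \<le> 0" by blast
  qed simp
  then show ?thesis unfolding g_def v_def by simp
qed

lemma lower:
  fixes V :: "'a::real_inner \<Rightarrow> real"
  assumes grad: "\<And>y. (V has_derivative (\<lambda>h. G y \<bullet> h)) (at y)"
    and mconv: "m_convex m V"
  shows "V w + G w \<bullet> (z - w) + m/2 * (norm (z - w))\<^sup>2 \<le> V z"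
proof -
  define v where "v = z - w"
  define q where "q = (\<lambda>t. V (w + t *\<^sub>R v))"
  define R where "R = V z - V w - m/2 * (norm v)\<^sup>2"
  have dq: "(q has_real_derivative (G w \<bullet> v)) (at 0)"
    unfolding q_def using line_deriv[OF grad, where w=w and t=0 and v=v] by simp
  have lim1: "((\<lambda>t. (q t - q 0) / (t - 0)) \<longlongrightarrow> G w \<bullet> v) (at_right 0)"
    using dq unfolding has_field_derivative_iff by (rule filterlim_mono) (auto simp: at_le)
  have lim2: "((\<lambda>t. R + m/2 * t * (norm v)\<^sup>2) \<longlongrightarrow> R + m/2 * 0 * (norm v)\<^sup>2) (at_right 0)"
    by (intro tendsto_intros)
  have ev: "\<forall>\<^sub>F t in at_right 0. (q t - q 0) / (t - 0) \<le> R + m/2 * t * (norm v)\<^sup>2"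
    unfolding eventually_at_right_field
  proof (intro exI[of _ 1] conjI allI impI)
    fix t :: real assume t: "0 < t" "t < 1"
    have "t *\<^sub>R z + (1 - t) *\<^sub>R w = w + t *\<^sub>R v"
      unfolding v_def by (simp add: algebra_simps)
    then have "q t \<le> t * V z + (1 - t) * V w - (m / 2) * t * (1 - t) * (norm v)\<^sup>2"
      using mconv t unfolding m_convex_def q_def v_def
      by (metis atLeastAtMost_iff less_eq_real_def)
    then have "q t - q 0 \<le> t * (R + m/2 * t * (norm v)\<^sup>2)"
      unfolding q_def R_def by (simp add: algebra_simps diff_divide_distrib)
    then show "(q t - q 0) / (t - 0) \<le> R + m/2 * t * (norm v)\<^sup>2"
      using t by (simp add: divide_le_eq mult.commute)
  qed simp
  have "G w \<bullet> v \<le> R"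
    using tendsto_le[OF trivial_limit_at_right_real lim2 lim1 ev] by simp
  then show ?thesis unfolding R_def v_def by simp
qed

lemma coco:
  fixes f :: "'a::real_inner \<Rightarrow> real"
  assumes low: "\<And>z w. f w + G w \<bullet> (z - w) \<le> f z"
    and up: "\<And>z w. f z \<le> f w + G w \<bullet> (z - w) + L/2 * (norm (z - w))\<^sup>2"
  shows "(norm (G a - G b))\<^sup>2 \<le> L * ((G a - G b) \<bullet> (a - b))"
proof -
  define D where "D = G a - G b"
  have key: "(2 * t - L * t^2) * (norm D)\<^sup>2 \<le> D \<bullet> (a - b)" for t
  proof -
    have 1: "f b + G b \<bullet> ((a - t *\<^sub>R D) - b) \<le> f (a - t *\<^sub>R D)" by (rule low)
    have 2: "f (a - t *\<^sub>R D) \<le> f a + G a \<bullet> ((a - t *\<^sub>R D) - a) + L/2 * (norm ((a - t *\<^sub>R D) - a))\<^sup>2" by (rule up)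
    have 3: "f a + G a \<bullet> ((b + t *\<^sub>R D) - a) \<le> f (b + t *\<^sub>R D)" by (rule low)
    have 4: "f (b + t *\<^sub>R D) \<le> f b + G b \<bullet> ((b + t *\<^sub>R D) - b) + L/2 * (norm ((b + t *\<^sub>R D) - b))\<^sup>2" by (rule up)
    have n: "(norm (t *\<^sub>R D))\<^sup>2 = t^2 * (norm D)\<^sup>2" by (simp add: power_mult_distrib)
    have e: "G b \<bullet> ((a - t *\<^sub>R D) - b) - G a \<bullet> ((a - t *\<^sub>R D) - a) + G a \<bullet> ((b + t *\<^sub>R D) - a) - G b \<bullet> ((b + t *\<^sub>R D) - b)
        = 2 * t * (norm D)\<^sup>2 - D \<bullet> (a - b)"
      unfolding D_def by (simp add: inner_simps power2_norm_eq_inner algebra_simps)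
    show ?thesis using 1 2 3 4 n e by (simp add: algebra_simps)
  qed
  show ?thesis
  proof (cases "D = 0")
    case True then show ?thesis unfolding D_def by simp
  next
    case False
    then have pos: "(norm D)\<^sup>2 > 0" by simp
    show ?thesis
    proof (cases "L > 0")
      case True
      have "(2 * (1/L) - L * (1/L)^2) * (norm D)\<^sup>2 \<le> D \<bullet> (a - b)" by (rule key)
      moreover have "2 * (1/L) - L * (1/L)^2 = 1/L" using True by (simp add: power2_eq_square field_simps)
      ultimately have "(norm D)\<^sup>2 / L \<le> D \<bullet> (a - b)" by simp
      then show ?thesis using True unfolding D_def by (simp add: divide_le_eq mult.commute)
    next
      case False
      define t where "t = (\<bar>D \<bullet> (a - b)\<bar> + 1) / (norm D)\<^sup>2"
      have tpos: "t > 0" unfolding t_def using pos by simp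
      have "2 * t * (norm D)\<^sup>2 \<le> (2 * t - L * t^2) * (norm D)\<^sup>2"
        using False pos tpos by (intro mult_right_mono) (auto simp: mult_nonpos_nonneg)
      also have "\<dots> \<le> D \<bullet> (a - b)" by (rule key)
      finally have "2 * (\<bar>D \<bullet> (a - b)\<bar> + 1) \<le> D \<bullet> (a - b)"
        unfolding t_def using pos by simp
      then show ?thesis by simp
    qed
  qed
qed

theorem lemma12:
  fixes V :: "real ^ 'd \<Rightarrow> real" and gradV :: "real ^ 'd \<Rightarrow> real ^ 'd"
    and m M gbar \<gamma> :: real and xstar x :: "real ^ 'd"
  assumes mconv: "m_convex m V" and m_nonneg: "m \<ge> 0"
    and grad: "\<And>y. (V has_derivative (\<lambda>h. gradV y \<bullet> h)) (at y)"
    and grad_cont: "continuous_on UNIV gradV"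
    and lip: "\<And>y z. norm (gradV y - gradV z) \<le> M * norm (y - z)"
    and M_pos: "M > 0"
    and argmin: "\<And>y. V xstar \<le> V y"
    and gbar: "gbar < 2 / (M + m)"
    and gam: "0 < \<gamma>" "\<gamma> \<le> gbar"
  shows "(norm (x - \<gamma> *\<^sub>R gradV x))\<^sup>2
    \<le> (1 - \<gamma> * (m * M / (m + M))) * (norm x)\<^sup>2
       + \<gamma> * (inverse (2 / (m + M) - gbar) + 4 * (m * M / (m + M))) * (norm xstar)\<^sup>2"
proof -
  note up = upper[OF grad lip]
  note lo = lower[OF grad mconv]
  have sq: "(norm z)\<^sup>2 = (norm w)\<^sup>2 + 2 * (w \<bullet> (z - w)) + (norm (z - w))\<^sup>2" for z w :: "real ^ 'd"
    by (simp add: power2_norm_eq_inner inner_simps algebra_simps inner_commute)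
  have gs0: "gradV xstar = 0"
  proof -
    define gs where "gs = gradV xstar"
    have nn: "norm gs * norm gs = gs \<bullet> gs" by (simp add: dot_square_norm power2_eq_square)
    have "V xstar \<le> V (xstar - (1/M) *\<^sub>R gs)" by (rule argmin)
    also have "\<dots> \<le> V xstar + gs \<bullet> ((xstar - (1/M) *\<^sub>R gs) - xstar) + M/2 * (norm ((xstar - (1/M) *\<^sub>R gs) - xstar))\<^sup>2"
      unfolding gs_def by (rule up)
    also have "\<dots> = V xstar - (norm gs)\<^sup>2 / (2 * M)"
      using M_pos nn by (simp add: power2_norm_eq_inner power_mult_distrib power2_eq_square field_simps)
    finally have "(norm gs)\<^sup>2 \<le> 0" using M_pos by (simp add: divide_le_0_iff)
    then show ?thesis unfolding gs_def by simp
  qed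
  define f where "f = (\<lambda>z. V z - m/2 * (norm z)\<^sup>2)"
  define G where "G = (\<lambda>z. gradV z - m *\<^sub>R z)"
  have flow: "f w + G w \<bullet> (z - w) \<le> f z" for z w
  proof -
    have "V w + gradV w \<bullet> (z - w) + m/2 * (norm (z - w))\<^sup>2 \<le> V z" by (rule lo)
    moreover have "m/2 * (norm z)\<^sup>2 = m/2*(norm w)\<^sup>2 + m*(w \<bullet> (z-w)) + m/2*(norm (z-w))\<^sup>2"
      by (subst sq[of z w]) (simp add: algebra_simps)
    moreover have "(gradV w - m *\<^sub>R w) \<bullet> (z-w) = gradV w \<bullet> (z-w) - m * (w \<bullet> (z-w))"
      by (simp add: inner_diff_left)
    moreover have "(M-m)/2*(norm(z-w))\<^sup>2 = M/2*(norm(z-w))\<^sup>2 - m/2*(norm(z-w))\<^sup>2"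
      by (simp add: algebra_simps diff_divide_distrib)
    ultimately show ?thesis unfolding f_def G_def by linarith
  qed
  have fup: "f z \<le> f w + G w \<bullet> (z - w) + (M - m)/2 * (norm (z - w))\<^sup>2" for z w
  proof -
    have "V z \<le> V w + gradV w \<bullet> (z - w) + M/2 * (norm (z - w))\<^sup>2" by (rule up)
    moreover have "m/2 * (norm z)\<^sup>2 = m/2*(norm w)\<^sup>2 + m*(w \<bullet> (z-w)) + m/2*(norm (z-w))\<^sup>2"
      by (subst sq[of z w]) (simp add: algebra_simps)
    moreover have "(gradV w - m *\<^sub>R w) \<bullet> (z-w) = gradV w \<bullet> (z-w) - m * (w \<bullet> (z-w))"
      by (simp add: inner_diff_left)
    moreover have "(M-m)/2*(norm(z-w))\<^sup>2 = M/2*(norm(z-w))\<^sup>2 - m/2*(norm(z-w))\<^sup>2"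
      by (simp add: algebra_simps diff_divide_distrib)
    ultimately show ?thesis unfolding f_def G_def by linarith
  qed
  define g where "g = gradV x"
  define u where "u = x - xstar"
  have c: "(norm (G x - G xstar))\<^sup>2 \<le> (M - m) * ((G x - G xstar) \<bullet> (x - xstar))"
    by (rule coco[of f G, OF flow fup])
  have GG: "G x - G xstar = g - m *\<^sub>R u"
    unfolding G_def g_def u_def gs0 by (simp add: algebra_simps)
  have key: "(norm g)\<^sup>2 + m * M * (norm u)\<^sup>2 \<le> (M + m) * (g \<bullet> u)"
    using c unfolding GG u_def[symmetric]
    by (simp add: power2_norm_eq_inner inner_simps algebra_simps inner_commute)
  define K where "K = m + M"
  define w where "w = m * M / (m + M)"
  define C where "C = 2 / (m + M) - gbar"
  define a where "a = (norm x)\<^sup>2"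
  define b where "b = (norm g)\<^sup>2"
  define c where "c = (norm xstar)\<^sup>2"
  define p where "p = g \<bullet> x"
  define q where "q = g \<bullet> xstar"
  define r where "r = x \<bullet> xstar"
  have Kpos: "K > 0" unfolding K_def using M_pos m_nonneg by simp
  have wnn: "w \<ge> 0" unfolding w_def using M_pos m_nonneg by simp
  have Cpos: "C > 0" unfolding C_def using gbar by (simp add: add.commute)
  have bnn: "b \<ge> 0" "c \<ge> 0" unfolding b_def c_def by simp_all
  have gC: "\<gamma> \<le> 2 / K - C" unfolding C_def K_def using gam by simp
  have s1: "(norm (x - \<gamma> *\<^sub>R gradV x))\<^sup>2 = a - 2 * \<gamma> * p + \<gamma>^2 * b"
    unfolding a_def b_def p_def g_def power2_norm_eq_inner
    by (simp add: inner_simps inner_commute algebra_simps power2_eq_square)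
  have nu: "(norm u)\<^sup>2 = a - 2 * r + c" and gu: "g \<bullet> u = p - q"
    unfolding a_def c_def r_def u_def p_def q_def
    by (simp_all add: power2_norm_eq_inner inner_simps inner_commute algebra_simps)
  have F1: "0 \<le> C^2 * b + 2 * C * q + c"
  proof -
    have "0 \<le> (norm (C *\<^sub>R g + xstar))\<^sup>2" by simp
    also have "\<dots> = C^2 * b + 2 * C * q + c"
      unfolding b_def c_def q_def power2_norm_eq_inner
      by (simp add: inner_simps inner_commute algebra_simps power2_eq_square)
    finally show ?thesis .
  qed
  have F2: "0 \<le> a - 4 * r + 4 * c"
  proof -
    have "0 \<le> (norm (x - 2 *\<^sub>R xstar))\<^sup>2" by simp
    also have "\<dots> = a - 4 * r + 4 * c"
      unfolding a_def c_def r_def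
      by (simp add: power2_norm_eq_inner inner_simps inner_commute algebra_simps)
    finally show ?thesis .
  qed
  have key2: "b + m * M * (a - 2 * r + c) \<le> K * (p - q)"
    using key unfolding nu gu b_def K_def by (simp add: add.commute)
  have s2: "q + b / K + w * (a - 2 * r + c) \<le> p"
  proof -
    have "b / K + w * (a - 2 * r + c) = (b + m * M * (a - 2 * r + c)) / K"
      unfolding w_def K_def by (simp add: add_divide_distrib)
    also have "\<dots> \<le> p - q" using key2 Kpos by (simp add: divide_le_eq mult.commute)
    finally show ?thesis by simp
  qed
  have s3: "\<gamma>^2 * b \<le> \<gamma> * (2 / K - C) * b"
    using gC gam bnn by (simp add: power2_eq_square mult_right_mono mult_left_mono)
  have s4: "- 2 * \<gamma> * q - \<gamma> * C * b \<le> \<gamma> * c / C"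
  proof -
    have "0 \<le> (\<gamma> / C) * (C^2 * b + 2 * C * q + c)" using F1 gam Cpos by simp
    also have "\<dots> = \<gamma> * C * b + 2 * \<gamma> * q + \<gamma> * c / C"
      using Cpos by (simp add: field_simps power2_eq_square)
    finally show ?thesis by simp
  qed
  have s5: "- 2 * \<gamma> * w * (a - 2 * r + c) \<le> - \<gamma> * w * a + 4 * \<gamma> * w * c"
  proof -
    have "0 \<le> \<gamma> * w * (a - 4 * r + 6 * c)" using F2 bnn gam wnn by simp
    then show ?thesis by (simp add: algebra_simps)
  qed
  have s2': "2 * \<gamma> * q + 2 * \<gamma> * b / K + 2 * \<gamma> * w * (a - 2 * r + c) \<le> 2 * \<gamma> * p"
    using mult_left_mono[OF s2, of "2 * \<gamma>"] gam by (simp add: algebra_simps)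
  have s3': "\<gamma> * (2 / K - C) * b = 2 * \<gamma> * b / K - \<gamma> * C * b" by (simp add: algebra_simps)
  have "(norm (x - \<gamma> *\<^sub>R gradV x))\<^sup>2 \<le> (1 - \<gamma> * w) * a + \<gamma> * (1 / C + 4 * w) * c"
    unfolding s1 using s2' s3 s3' s4 s5 by (simp add: algebra_simps)
  then show ?thesis unfolding w_def C_def a_def c_def by (simp add: inverse_eq_divide)

qed

end
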